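(* In the setup described in the context, assume the Levi-Civita connection of $\tilde g$ is locally flat ($\tilde R=0$). Let $x\in T_pM$ induce a $Q$-basis, and let $\psi=\angle(x,Q^2x)$ be the $g$-angle. Then $$r(x)=r(Qx)=r(Q^2x)=r(Q^3x)=\frac{\cos\psi}{8}(3\tau^*+\tau)+\frac18(3\tau+\tau^* ).$$
   Context: Let $M$ be a 3-dimensional smooth manifold. Fix a coordinate chart $(x^1,x^2,x^3)$ with coordinate vector fields $\partial_i$. Structures: - $g$ is a Riemannian metric with $g(\partial_1,\partial_1)=g(\partial_2,\partial_2)=A$, $g(\partial_3,\partial_3)=B$ and $g(\partial_i,\partial_j)=0$ for $i\ne j$. Here $A,B$ are smooth positive functions. - $Q$ is the $(1,1)$-tensor field with $Q\partial_1=\partial_2$, $Q\partial_2=-\partial_1$, $Q\partial_3=\partial_3$. - $P=Q^2$ and $\tilde g(x,y)=g(x,Py)$. Curvature: - $\nabla$ and $\tilde\nabla$ are the Levi-Civita connections of $g$ and $\tilde g$, with curvatures $R$ and $\tilde R$. - $R(x,y)z=\nabla_x\nabla_yz-\nabla_y\nabla_xz-\nabla_{[x,y]}z$ and $R(x,y,z,t)=g(R(x,y)z,t)$. - $\rho(y,z)=g^{ij}R(e_i,y,z,e_j)$, $\tau=g^{ij}\rho_{ij}$ and $\tau^*=\tilde g^{ij}\rho_{ij}$. - $r(x)=\rho(x,x)/g(x,x)$. Angles and $Q$-bases: - The $g$-angle is defined by $\cos\angle(u,v)=g(u,v)/\sqrt{g(u,u)g(v,v)}$. - A vector $x$ induces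 a $Q$-basis if $\{x,Qx,Q^2x\}$ is a basis of $T_pM$. *)

theory Defs
  imports "HOL-Analysis.Analysis"
begin

text \<open>Everything is expressed in the fixed coordinate chart: points of the chart domain
are vectors in real^3, coordinate indices 1,2,3 are elements of the type 3
(where the index 3 coincides with 0), tangent vectors at p are their component vectors
in the basis of coordinate vector fields, and (0,2)-tensors are 3x3 matrices.\<close>

definition pd :: "3 \<Rightarrow> (real^3 \<Rightarrow> real) \<Rightarrow> real^3 \<Rightarrow> real" where
  "pd i f p = deriv (\<lambda>t. f (p + t *\<^sub>R axis i 1)) 0"

fun ipd :: "3 list \<Rightarrow> (real^3 \<Rightarrow> real) \<Rightarrow> real^3 \<Rightarrow> real" where
  "ipd [] f = f"
| "ipd (i # is) f = pd i (ipd is f)"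

definition smooth_on3 :: "(real^3) set \<Rightarrow> (real^3 \<Rightarrow> real) \<Rightarrow> bool" where
  "smooth_on3 U f \<longleftrightarrow> (\<forall>ks p. p \<in> U \<longrightarrow> ipd ks f differentiable (at p))"

definition christ :: "(real^3 \<Rightarrow> real^3^3) \<Rightarrow> real^3 \<Rightarrow> 3 \<Rightarrow> 3 \<Rightarrow> 3 \<Rightarrow> real" where
  "christ G p k i j = (\<Sum>l\<in>UNIV. matrix_inv (G p) $ k $ l *
      (pd i (\<lambda>q. G q $ j $ l) p + pd j (\<lambda>q. G q $ i $ l) p - pd l (\<lambda>q. G q $ i $ j) p)) / 2"

text \<open>m-th component of R(d_i,d_j)d_k, with R(x,y)z = nabla_x nabla_y z - nabla_y nabla_x z - nabla_[x,y] z.\<close>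
definition curv :: "(real^3 \<Rightarrow> real^3^3) \<Rightarrow> real^3 \<Rightarrow> 3 \<Rightarrow> 3 \<Rightarrow> 3 \<Rightarrow> 3 \<Rightarrow> real" where
  "curv G p i j k m = pd i (\<lambda>q. christ G q m j k) p - pd j (\<lambda>q. christ G q m i k) p
     + (\<Sum>l\<in>UNIV. christ G p l j k * christ G p m i l - christ G p l i k * christ G p m j l)"

definition Rtensor :: "(real^3 \<Rightarrow> real^3^3) \<Rightarrow> real^3 \<Rightarrow> 3 \<Rightarrow> 3 \<Rightarrow> 3 \<Rightarrow> 3 \<Rightarrow> real" where
  "Rtensor G p i j k t = (\<Sum>m\<in>UNIV. curv G p i j k m * G p $ m $ t)"

definition ricci :: "(real^3 \<Rightarrow> real^3^3) \<Rightarrow> real^3 \<Rightarrow> 3 \<Rightarrow> 3 \<Rightarrow> real" where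
  "ricci G p y z = (\<Sum>i\<in>UNIV. \<Sum>j\<in>UNIV. matrix_inv (G p) $ i $ j * Rtensor G p i y z j)"

definition scal :: "(real^3 \<Rightarrow> real^3^3) \<Rightarrow> real^3 \<Rightarrow> real" where
  "scal G p = (\<Sum>i\<in>UNIV. \<Sum>j\<in>UNIV. matrix_inv (G p) $ i $ j * ricci G p i j)"

definition scal_star :: "(real^3 \<Rightarrow> real^3^3) \<Rightarrow> (real^3 \<Rightarrow> real^3^3) \<Rightarrow> real^3 \<Rightarrow> real" where
  "scal_star G Gt p = (\<Sum>i\<in>UNIV. \<Sum>j\<in>UNIV. matrix_inv (Gt p) $ i $ j * ricci G p i j)"

definition gval :: "(real^3 \<Rightarrow> real^3^3) \<Rightarrow> real^3 \<Rightarrow> real^3 \<Rightarrow> real^3 \<Rightarrow> real" where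
  "gval G p u v = u \<bullet> (G p *v v)"

definition rfun :: "(real^3 \<Rightarrow> real^3^3) \<Rightarrow> real^3 \<Rightarrow> real^3 \<Rightarrow> real" where
  "rfun G p x = (\<Sum>i\<in>UNIV. \<Sum>j\<in>UNIV. x $ i * x $ j * ricci G p i j) / gval G p x x"

definition g_angle :: "(real^3 \<Rightarrow> real^3^3) \<Rightarrow> real^3 \<Rightarrow> real^3 \<Rightarrow> real^3 \<Rightarrow> real" where
  "g_angle G p u v = arccos (gval G p u v / sqrt (gval G p u u * gval G p v v))"

text \<open>Matrix of Q: column j is the component vector of Q d_j.
  Q d_1 = d_2, Q d_2 = - d_1, Q d_3 = d_3.\<close>
definition Qmat :: "real^3^3" where
  "Qmat = (\<chi> k j. if j = 1 then (if k = 2 then 1 else 0)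
                  else if j = 2 then (if k = 1 then -1 else 0)
                  else (if k = 3 then 1 else 0))"

definition Pmat :: "real^3^3" where
  "Pmat = Qmat ** Qmat"

definition gmet :: "(real^3 \<Rightarrow> real) \<Rightarrow> (real^3 \<Rightarrow> real) \<Rightarrow> real^3 \<Rightarrow> real^3^3" where
  "gmet A B p = (\<chi> i j. if i = j then (if i = 3 then B p else A p) else 0)"

definition gtil :: "(real^3 \<Rightarrow> real) \<Rightarrow> (real^3 \<Rightarrow> real) \<Rightarrow> real^3 \<Rightarrow> real^3^3" where
  "gtil A B p = gmet A B p ** Pmat"

definition induces_Q_basis :: "real^3 \<Rightarrow> bool" where
  "induces_Q_basis x \<longleftrightarrow>
     (let S = {x, Qmat *v x, (Qmat ** Qmat) *v x} in independent S \<and> span S = UNIV)"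

end

theory Submission
  imports Defs
begin



lemma pd_has:
  assumes "f differentiable (at p)"
  shows "((\<lambda>t. f (p + t *\<^sub>R axis i 1)) has_real_derivative pd i f p) (at 0)"
proof -
  have l: "(\<lambda>t::real. p + t *\<^sub>R axis i (1::real)) differentiable (at 0)"
    by (intro derivative_intros)
  have "(f \<circ> (\<lambda>t::real. p + t *\<^sub>R axis i (1::real))) differentiable (at 0)"
    by (rule differentiable_chain_at[OF l]) (simp add: assms)
  then show ?thesis unfolding pd_def
    by (simp add: DERIV_deriv_iff_real_differentiable o_def)
qed

lemma pd_local:
  assumes "open U" "p \<in> U" "\<And>q. q \<in> U \<Longrightarrow> f q = g q"
  shows "pd i f p = pd i g p"
proof -
  let ?L = "\<lambda>t::real. p + t *\<^sub>R axis i (1::real)"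
  have o: "open (?L -` U)"
    by (rule continuous_open_vimage[OF assms(1)]) (intro continuous_intros)
  have "0 \<in> ?L -` U" using assms(2) by simp
  then have "\<forall>\<^sub>F t in nhds 0. ?L t \<in> U"
    using o eventually_nhds by blast
  then have "\<forall>\<^sub>F t in nhds 0. f (p + t *\<^sub>R axis i 1) = g (p + t *\<^sub>R axis i 1)"
    by (rule eventually_mono) (simp add: assms(3))
  then show ?thesis unfolding pd_def by (rule deriv_cong_ev) simp
qed

lemma pd_cmult:
  assumes "f differentiable (at p)"
  shows "pd i (\<lambda>q. c * f q) p = c * pd i f p"
  unfolding pd_def
  by (rule DERIV_imp_deriv, rule DERIV_cmult, rule pd_has[OF assms, unfolded pd_def])

lemma pd_const: "pd i (\<lambda>q. c) p = 0"
  unfolding pd_def by simp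

lemma matrix_inv_unique:
  fixes A X :: "real^3^3"
  assumes "A ** X = mat 1" "X ** A = mat 1"
  shows "matrix_inv A = X"
proof -
  have "\<exists>A'. A ** A' = mat 1 \<and> A' ** A = mat 1" using assms by blast
  then have Y: "A ** matrix_inv A = mat 1 \<and> matrix_inv A ** A = mat 1"
    unfolding matrix_inv_def by (rule someI_ex)
  have "matrix_inv A = matrix_inv A ** (A ** X)" by (simp add: assms)
  also have "\<dots> = (matrix_inv A ** A) ** X" by (simp add: matrix_mul_assoc)
  also have "\<dots> = X" using Y by simp
  finally show ?thesis .
qed

lemma sum_delta_mult: "(\<Sum>l\<in>(UNIV::3 set). (if m = l then c else 0) * X l) = c * (X m :: real)"
proof -
  have "(\<Sum>l\<in>(UNIV::3 set). (if m = l then c else 0) * X l) = (\<Sum>l\<in>(UNIV::3 set). if l = m then c * X m else 0)"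
    by (rule sum.cong) auto
  then show ?thesis by simp
qed

lemma diag_mult:
  "(\<chi> i j. if i = j then d i else 0) ** (\<chi> i j. if i = j then e i else 0)
   = ((\<chi> i j. if i = j then d i * e i else (0::real)) :: real^3^3)"
proof -
  have "\<And>i j. (\<Sum>k\<in>(UNIV::3 set). (if i = k then d i else 0) * (if k = j then e k else 0))
      = (if i = j then d i * e i else (0::real))"
    by (subst sum_delta_mult) auto
  then show ?thesis by (simp add: matrix_matrix_mult_def vec_eq_iff)
qed

lemma mat1_diag: "(mat 1 :: real^3^3) = (\<chi> i j. if i = j then 1 else 0)"
  by (simp add: mat_def)

lemma inv_diag:
  assumes "\<And>k. d k \<noteq> (0::real)"
  shows "matrix_inv ((\<chi> i j. if i = j then d i else 0) :: real^3^3)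
        = (\<chi> i j. if i = j then 1 / d i else 0)"
proof (rule matrix_inv_unique)
  show "(\<chi> i j. if i = j then d i else 0) ** (\<chi> i j. if i = j then 1 / d i else 0) = (mat 1 :: real^3^3)"
    unfolding diag_mult mat1_diag using assms by (simp add: vec_eq_iff)
  show "(\<chi> i j. if i = j then 1 / d i else 0) ** (\<chi> i j. if i = j then d i else 0) = (mat 1 :: real^3^3)"
    unfolding diag_mult mat1_diag using assms by (simp add: vec_eq_iff)
qed

lemma pd_if: "pd i (\<lambda>q. if c then f q else 0) p = (if c then pd i f p else 0)"
  by (cases c) (simp_all add: pd_const)

lemma christ_diag:
  assumes G: "\<And>q. G q = (\<chi> i j. if i = j then D i q else 0)"
    and nz: "\<And>k. D k q \<noteq> 0"
  shows "christ G q m i j = ((if m = j then pd i (D m) q else 0) + (if m = i then pd j (D m) q else 0)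
          - (if i = j then pd m (D i) q else 0)) / (2 * D m q)"
proof -
  have e: "\<And>a b. (\<lambda>q. G q $ a $ b) = (\<lambda>q. if a = b then D a q else 0)"
    by (auto simp: G)
  have i: "matrix_inv (G q) $ m $ l = (if m = l then 1 / D m q else 0)" for l
    by (simp add: G inv_diag nz)
  show ?thesis
    unfolding christ_def i e pd_if sum_delta_mult
    using nz[of m] by (simp add: divide_simps)
qed



definition eps :: "3 \<Rightarrow> real" where "eps k = (if k = 3 then 1 else -1)"
definition sg :: "3 \<Rightarrow> 3 \<Rightarrow> real" where "sg i m = eps i * eps m"

context fixes a b :: real and dA dB :: "3 \<Rightarrow> real" and ddA ddB :: "3 \<Rightarrow> 3 \<Rightarrow> real"
begin
definition "hv k = (if k = 3 then b else a)"
definition "dv i k = (if k = 3 then dB i else dA i)"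
definition "ddv l i k = (if k = 3 then ddB l i else ddA l i)"
definition "Nm s m i j = (if m = j then dv i m else 0) + (if m = i then dv j m else 0) - (if i = j then s i m * dv m i else 0)"
definition "dNm s l m i j = (if m = j then ddv l i m else 0) + (if m = i then ddv l j m else 0) - (if i = j then s i m * ddv l m i else 0)"
definition "Gam s m i j = Nm s m i j / (2 * hv m)"
definition "dGam s l m i j = (dNm s l m i j * hv m - Nm s m i j * dv l m) / (2 * hv m ^ 2)"
definition "Cf s i j k m = dGam s i m j k - dGam s j m i k
   + (\<Sum>l\<in>UNIV. Gam s l j k * Gam s m i l - Gam s l i k * Gam s m j l)"
definition "Ric y z = (\<Sum>i\<in>UNIV. Cf (\<lambda>_ _. 1) i y z i)"

lemmas alg_defs = Ric_def Cf_def sum_3 Gam_def dGam_def Nm_def dNm_def hv_def dv_def ddv_def sg_def eps_def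

lemma r12: assumes "a \<noteq> 0" "b \<noteq> 0"
  shows "Ric 1 2 = - Cf sg 1 2 1 1 - Cf sg 1 3 2 3"
  using assms by (simp add: alg_defs; simp add: divide_simps)

lemma r21: assumes "a \<noteq> 0" "b \<noteq> 0"
  shows "Ric 2 1 = Cf sg 1 2 1 1 + Cf sg 1 2 3 3 - Cf sg 1 3 2 3"
  using assms by (simp add: alg_defs; simp add: divide_simps)

lemma r13: assumes "a \<noteq> 0" "b \<noteq> 0"
  shows "Ric 1 3 = - Cf sg 1 2 3 2 - Cf sg 1 3 3 3"
  using assms by (simp add: alg_defs; simp add: divide_simps)

lemma r31: assumes "a \<noteq> 0" "b \<noteq> 0"
  shows "Ric 3 1 = - Cf sg 1 2 3 2 + Cf sg 1 3 1 1 + Cf sg 1 3 2 2"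
  using assms by (simp add: alg_defs; simp add: divide_simps)

lemma r23: assumes "a \<noteq> 0" "b \<noteq> 0"
  shows "Ric 2 3 = Cf sg 1 2 3 1 - Cf sg 2 3 3 3"
  using assms by (simp add: alg_defs; simp add: divide_simps)

lemma r32: assumes "a \<noteq> 0" "b \<noteq> 0"
  shows "Ric 3 2 = - Cf sg 1 2 3 1 + Cf sg 1 3 1 2 + 3 * Cf sg 1 3 2 1"
  using assms by (simp add: alg_defs; simp add: divide_simps)

lemma r1122: assumes "a \<noteq> 0" "b \<noteq> 0"
  shows "Ric 1 1 - Ric 2 2 = - Cf sg 1 3 1 3 + Cf sg 2 3 2 3"
  using assms by (simp add: alg_defs; simp add: divide_simps)

end


definition hh :: "(real^3 \<Rightarrow> real) \<Rightarrow> (real^3 \<Rightarrow> real) \<Rightarrow> 3 \<Rightarrow> real^3 \<Rightarrow> real" where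
  "hh A B k q = (if k = 3 then B q else A q)"

lemma hh_fun: "hh A B k = (if k = 3 then B else A)"
  by (auto simp: hh_def)

lemma gmet_diag: "gmet A B q = (\<chi> i j. if i = j then hh A B i q else 0)"
  unfolding gmet_def hh_def by simp

lemma sum_delta_mult2: "(\<Sum>l\<in>(UNIV::3 set). X l * (if l = m then c l else 0)) = (X m :: real) * c m"
proof -
  have "(\<Sum>l\<in>(UNIV::3 set). X l * (if l = m then c l else 0)) = (\<Sum>l\<in>(UNIV::3 set). if l = m then X m * c m else 0)"
    by (rule sum.cong) auto
  then show ?thesis by simp
qed

lemma Qmat_nth: "Qmat $ k $ j = (if j = 1 then (if k = 2 then 1 else 0)
                  else if j = 2 then (if k = 1 then -1 else 0)
                  else (if k = 3 then 1 else 0))"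
  by (simp add: Qmat_def)

lemma Pmat_diag: "Pmat = (\<chi> i j. if i = j then eps i else 0)"
  unfolding Pmat_def
  by (simp add: vec_eq_iff matrix_matrix_mult_def sum_3 Qmat_nth eps_def forall_3)

lemma gtil_diag: "gtil A B q = (\<chi> i j. if i = j then hh A B i q * eps i else 0)"
  unfolding gtil_def gmet_diag Pmat_diag diag_mult by simp

lemma eps_nz: "eps k \<noteq> 0" by (simp add: eps_def)
lemma eps_sq: "eps k * eps k = 1" by (simp add: eps_def)

context
  fixes A B :: "real^3 \<Rightarrow> real" and U :: "(real^3) set"
  assumes sA: "smooth_on3 U A" and sB: "smooth_on3 U B"
    and pos: "\<forall>q\<in>U. A q > 0 \<and> B q > 0"
begin

lemma hh_diff: "q \<in> U \<Longrightarrow> hh A B k differentiable (at q)"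
proof -
  assume q: "q \<in> U"
  have "ipd [] A differentiable (at q)" "ipd [] B differentiable (at q)"
    using sA sB q unfolding smooth_on3_def by blast+
  then show ?thesis unfolding hh_fun by simp
qed

lemma dhh_diff: "q \<in> U \<Longrightarrow> pd i (hh A B k) differentiable (at q)"
proof -
  assume q: "q \<in> U"
  have "ipd [i] A differentiable (at q)" "ipd [i] B differentiable (at q)"
    using sA sB q unfolding smooth_on3_def by blast+
  then show ?thesis unfolding hh_fun by simp
qed

lemma hh_nz: "q \<in> U \<Longrightarrow> hh A B k q \<noteq> 0"
  using pos by (auto simp: hh_def)

lemma pd_hh: "pd i (hh A B k) q = (if k = 3 then pd i B q else pd i A q)"
  by (simp add: hh_fun)

lemma pd_quot3:
  assumes "F1 differentiable (at p)" "F2 differentiable (at p)" "F3 differentiable (at p)" "H differentiable (at p)" "H p \<noteq> 0"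
  shows "pd l (\<lambda>q. (c1 * F1 q + c2 * F2 q - c3 * F3 q) / (2 * H q)) p
    = ((c1 * pd l F1 p + c2 * pd l F2 p - c3 * pd l F3 p) * H p - (c1 * F1 p + c2 * F2 p - c3 * F3 p) * pd l H p) / (2 * H p ^ 2)"
proof -
  have D: "((\<lambda>t. (c1 * F1 (p + t *\<^sub>R axis l 1) + c2 * F2 (p + t *\<^sub>R axis l 1) - c3 * F3 (p + t *\<^sub>R axis l 1)) / (2 * H (p + t *\<^sub>R axis l 1)))
     has_real_derivative ((c1 * pd l F1 p + c2 * pd l F2 p - c3 * pd l F3 p) * H p - (c1 * F1 p + c2 * F2 p - c3 * F3 p) * pd l H p) / (2 * H p ^ 2)) (at 0)"
    using pd_has[OF assms(1), of l] pd_has[OF assms(2), of l] pd_has[OF assms(3), of l] pd_has[OF assms(4), of l] assms(5)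
    by (auto intro!: derivative_eq_intros simp: field_simps power2_eq_square)
  show ?thesis using DERIV_imp_deriv[OF D] by (simp add: pd_def)
qed

abbreviation "GamQ s q m i j \<equiv> Gam (A q) (B q) (\<lambda>i. pd i A q) (\<lambda>i. pd i B q) s m i j"

lemma GamQ_form: "q \<in> U \<Longrightarrow> GamQ s q m i j =
   ((if m = j then 1 else 0) * pd i (hh A B m) q + (if m = i then 1 else 0) * pd j (hh A B m) q
    - (if i = j then s i m else 0) * pd m (hh A B i) q) / (2 * hh A B m q)"
  by (simp add: Gam_def Nm_def dv_def hv_def pd_hh hh_def)

lemma christ_gmet: "q \<in> U \<Longrightarrow> christ (gmet A B) q m i j = GamQ (\<lambda>_ _. 1) q m i j"
  apply (subst christ_diag[of _ "hh A B"])
    apply (rule gmet_diag)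
   apply (simp add: hh_nz)
  apply (subst GamQ_form, assumption)
  apply simp
  done

lemma christ_gtil: "q \<in> U \<Longrightarrow> christ (gtil A B) q m i j = GamQ sg q m i j"
proof -
  assume q: "q \<in> U"
  have d: "pd a (\<lambda>q. hh A B k q * eps k) q = eps k * pd a (hh A B k) q" for a k
    using pd_cmult[OF hh_diff[OF q], of a "eps k"] by (simp add: mult.commute)
  show ?thesis
    apply (subst christ_diag[of _ "\<lambda>k q. hh A B k q * eps k"])
      apply (rule gtil_diag)
     apply (simp add: hh_nz q eps_nz)
    apply (subst GamQ_form[OF q])
    apply (simp only: d)
    using hh_nz[OF q, of m]
    apply (cases "m = j"; cases "m = i"; cases "i = j")
           apply (simp_all add: sg_def eps_def field_simps)
    done
qed

abbreviation "ddAp p \<equiv> (\<lambda>l i. pd l (pd i A) p)"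
abbreviation "ddBp p \<equiv> (\<lambda>l i. pd l (pd i B) p)"

lemma pd_GamQ:
  assumes U: "open U" "p \<in> U"
  shows "pd l (\<lambda>q. GamQ s q m i j) p = dGam (A p) (B p) (\<lambda>i. pd i A p) (\<lambda>i. pd i B p) (ddAp p) (ddBp p) s l m i j"
proof -
  have "pd l (\<lambda>q. GamQ s q m i j) p = pd l (\<lambda>q. ((if m = j then 1 else 0) * pd i (hh A B m) q + (if m = i then 1 else 0) * pd j (hh A B m) q
    - (if i = j then s i m else 0) * pd m (hh A B i) q) / (2 * hh A B m q)) p"
    by (rule pd_local[OF U]) (rule GamQ_form)
  also have "\<dots> = (((if m = j then 1 else 0) * pd l (pd i (hh A B m)) p + (if m = i then 1 else 0) * pd l (pd j (hh A B m)) p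
    - (if i = j then s i m else 0) * pd l (pd m (hh A B i)) p) * hh A B m p
    - ((if m = j then 1 else 0) * pd i (hh A B m) p + (if m = i then 1 else 0) * pd j (hh A B m) p
    - (if i = j then s i m else 0) * pd m (hh A B i) p) * pd l (hh A B m) p) / (2 * hh A B m p ^ 2)"
    by (rule pd_quot3[OF dhh_diff[OF U(2)] dhh_diff[OF U(2)] dhh_diff[OF U(2)] hh_diff[OF U(2)] hh_nz[OF U(2)]])
  also have "\<dots> = dGam (A p) (B p) (\<lambda>i. pd i A p) (\<lambda>i. pd i B p) (ddAp p) (ddBp p) s l m i j"
    by (cases "m = 3"; cases "i = 3") (simp_all add: dGam_def dNm_def Nm_def ddv_def dv_def hv_def hh_fun)
  finally show ?thesis .
qed

lemma curv_gen:
  assumes U: "open U" "p \<in> U"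
    and ch: "\<And>q m i j. q \<in> U \<Longrightarrow> christ G q m i j = GamQ s q m i j"
  shows "curv G p i j k m = Cf (A p) (B p) (\<lambda>i. pd i A p) (\<lambda>i. pd i B p) (ddAp p) (ddBp p) s i j k m"
proof -
  have e: "pd a (\<lambda>q. christ G q c d e) p = pd a (\<lambda>q. GamQ s q c d e) p" for a c d e
    by (rule pd_local[OF U]) (rule ch)
  show ?thesis
    unfolding curv_def Cf_def e pd_GamQ[OF U] ch[OF U(2)] by simp
qed

lemma inv_gmet: "p \<in> U \<Longrightarrow> matrix_inv (gmet A B p) $ i $ j = (if i = j then 1 / hh A B i p else 0)"
  by (simp add: gmet_diag inv_diag hh_nz)

lemma inv_gtil: "p \<in> U \<Longrightarrow> matrix_inv (gtil A B p) $ i $ j = (if i = j then 1 / (hh A B i p * eps i) else 0)"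
  by (simp add: gtil_diag inv_diag hh_nz eps_nz)

lemma gmet_nth: "gmet A B p $ i $ j = (if i = j then hh A B i p else 0)"
  by (simp add: gmet_diag)

lemma ricci_gmet: "p \<in> U \<Longrightarrow> ricci (gmet A B) p y z = (\<Sum>i\<in>UNIV. curv (gmet A B) p i y z i)"
proof -
  assume p: "p \<in> U"
  have "ricci (gmet A B) p y z = (\<Sum>i\<in>UNIV. (1 / hh A B i p) * (curv (gmet A B) p i y z i * hh A B i p))"
    unfolding ricci_def Rtensor_def inv_gmet[OF p] gmet_nth
    by (simp only: sum_delta_mult2 sum_delta_mult)
  also have "\<dots> = (\<Sum>i\<in>UNIV. curv (gmet A B) p i y z i)"
    using hh_nz[OF p] by simp
  finally show ?thesis .
qed

lemma scal_gmet: "p \<in> U \<Longrightarrow> scal (gmet A B) p = (\<Sum>i\<in>UNIV. (1 / hh A B i p) * ricci (gmet A B) p i i)"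
  unfolding scal_def by (simp only: inv_gmet sum_delta_mult)

lemma scal_star_gmet: "p \<in> U \<Longrightarrow> scal_star (gmet A B) (gtil A B) p = (\<Sum>i\<in>UNIV. (1 / (hh A B i p * eps i)) * ricci (gmet A B) p i i)"
  unfolding scal_star_def by (simp only: inv_gtil sum_delta_mult)

end


lemma gval_form: "gval (gmet A B) p u v = A p * (u$1 * v$1 + u$2 * v$2) + B p * (u$3 * v$3)"
  unfolding gval_def inner_vec_def matrix_vector_mult_def
  by (simp add: sum_3 gmet_def algebra_simps)

lemma mv3: "((M::real^3^3) *v v) $ k = M$k$1 * v$1 + M$k$2 * v$2 + M$k$3 * (v$3::real)"
  unfolding matrix_vector_mult_def by (simp add: sum_3)

lemma Qv: "(Qmat *v v)$1 = - v$1 * 0 - v$2" "(Qmat *v v)$2 = v$1" "(Qmat *v v)$3 = (v$3::real)"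
  by (simp_all add: mv3 Qmat_nth)

lemma Pv: "((Qmat ** Qmat) *v v)$1 = - v$1" "((Qmat ** Qmat) *v v)$2 = - v$2" "((Qmat ** Qmat) *v v)$3 = (v$3::real)"
  by (simp_all add: mv3 Pmat_def[symmetric] Pmat_diag eps_def)

lemma QQQv: "((Qmat ** Qmat ** Qmat) *v v)$1 = v$2" "((Qmat ** Qmat ** Qmat) *v v)$2 = - v$1" "((Qmat ** Qmat ** Qmat) *v v)$3 = (v$3::real)"
  by (simp_all add: matrix_vector_mul_assoc[symmetric] Pv Qv)

theorem proposition5p6:
  fixes A B :: "real^3 \<Rightarrow> real" and U :: "(real^3) set" and p x :: "real^3"
  assumes "open U"
    and "smooth_on3 U A" and "smooth_on3 U B"
    and "\<forall>q\<in>U. A q > 0 \<and> B q > 0"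
    and "\<forall>q\<in>U. \<forall>i j k m. curv (gtil A B) q i j k m = 0"
    and "p \<in> U"
    and "induces_Q_basis x"
  shows "rfun (gmet A B) p x = rfun (gmet A B) p (Qmat *v x)
       \<and> rfun (gmet A B) p (Qmat *v x) = rfun (gmet A B) p ((Qmat ** Qmat) *v x)
       \<and> rfun (gmet A B) p ((Qmat ** Qmat) *v x) = rfun (gmet A B) p ((Qmat ** Qmat ** Qmat) *v x)
       \<and> rfun (gmet A B) p ((Qmat ** Qmat ** Qmat) *v x)
           = cos (g_angle (gmet A B) p x ((Qmat ** Qmat) *v x)) / 8
               * (3 * scal_star (gmet A B) (gtil A B) p + scal (gmet A B) p)
             + (3 * scal (gmet A B) p + scal_star (gmet A B) (gtil A B) p) / 8"
proof -
  note U = assms(1) assms(6)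
  note sm = assms(2) assms(3) assms(4)
  define a where "a = A p"
  define b where "b = B p"
  define dA where "dA = (\<lambda>i. pd i A p)"
  define dB where "dB = (\<lambda>i. pd i B p)"
  define ddA where "ddA = (\<lambda>l i. pd l (pd i A) p)"
  define ddB where "ddB = (\<lambda>l i. pd l (pd i B) p)"
  have a0: "a > 0" and b0: "b > 0" using assms(4,6) by (auto simp: a_def b_def)
  have cg: "curv (gmet A B) p i j k m = Cf a b dA dB ddA ddB (\<lambda>_ _. 1) i j k m" for i j k m
    unfolding a_def b_def dA_def dB_def ddA_def ddB_def
    by (rule curv_gen[OF sm U]) (rule christ_gmet[OF sm])
  have ct: "curv (gtil A B) p i j k m = Cf a b dA dB ddA ddB sg i j k m" for i j k m
    unfolding a_def b_def dA_def dB_def ddA_def ddB_def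
    by (rule curv_gen[OF sm U]) (rule christ_gtil[OF sm])
  have z: "Cf a b dA dB ddA ddB sg i j k m = 0" for i j k m
    using assms(5,6) ct by metis
  have ric: "ricci (gmet A B) p y z = Ric a b dA dB ddA ddB y z" for y z
    unfolding ricci_gmet[OF sm U(2)] Ric_def cg ..
  define R where "R = ricci (gmet A B) p"
  have nz: "a \<noteq> 0" "b \<noteq> 0" using a0 b0 by auto
  have R00: "R 1 2 = 0" "R 2 1 = 0" "R 1 3 = 0" "R 3 1 = 0" "R 2 3 = 0" "R 3 2 = 0"
    unfolding R_def ric
    using r12[OF nz] r21[OF nz] r13[OF nz] r31[OF nz] r23[OF nz] r32[OF nz]
    by (simp_all add: z)
  have "R 1 1 - R 2 2 = 0"
    unfolding R_def ric
    using r1122[OF nz, of dA dB ddA ddB] by (simp add: z)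
  then have "R 2 2 = R 1 1" by simp
  note R0 = R00 this
  have rf: "rfun (gmet A B) p w = (R 1 1 * (w$1*w$1 + w$2*w$2) + R 3 3 * (w$3*w$3)) / (a * (w$1*w$1 + w$2*w$2) + b * (w$3*w$3))" for w
    unfolding rfun_def gval_form R_def[symmetric] a_def[symmetric] b_def[symmetric]
    by (simp add: sum_3 R0 algebra_simps)
  have sc: "scal (gmet A B) p = 2 * R 1 1 / a + R 3 3 / b"
    unfolding scal_gmet[OF sm U(2)] R_def[symmetric]
    by (simp add: sum_3 hh_def a_def b_def R0)
  have scs: "scal_star (gmet A B) (gtil A B) p = - 2 * R 1 1 / a + R 3 3 / b"
    unfolding scal_star_gmet[OF sm U(2)] R_def[symmetric]
    by (simp add: sum_3 hh_def a_def b_def R0 eps_def)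
  have x0: "x \<noteq> 0"
  proof
    assume "x = 0"
    then have "dependent {x, Qmat *v x, (Qmat ** Qmat) *v x}"
      by (intro dependent_zero) simp
    then show False using assms(7) unfolding induces_Q_basis_def Let_def by simp
  qed
  define s where "s = x$1*x$1 + x$2*x$2"
  define c where "c = x$3*x$3"
  have "x$1 \<noteq> 0 \<or> x$2 \<noteq> 0 \<or> x$3 \<noteq> 0"
    using x0 by (auto simp: vec_eq_iff forall_3)
  then have "s > 0 \<or> c > 0"
    unfolding s_def c_def
    by (metis add_nonneg_pos add_pos_nonneg not_real_square_gt_zero mult_nonneg_nonneg zero_le_square)
  moreover have "s \<ge> 0" "c \<ge> 0" unfolding s_def c_def by auto
  ultimately have N: "a * s + b * c > 0"
    using a0 b0 by (metis add_nonneg_pos add_pos_nonneg mult_nonneg_nonneg mult_pos_pos less_imp_le)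
  have gxx: "gval (gmet A B) p x x = a * s + b * c"
    by (simp add: gval_form a_def b_def s_def c_def)
  have gpp: "gval (gmet A B) p ((Qmat ** Qmat) *v x) ((Qmat ** Qmat) *v x) = a * s + b * c"
    by (simp add: gval_form a_def b_def s_def c_def Pv)
  have gxp: "gval (gmet A B) p x ((Qmat ** Qmat) *v x) = b * c - a * s"
    by (simp add: gval_form a_def b_def s_def c_def Pv algebra_simps)
  have sq: "sqrt ((a * s + b * c) * (a * s + b * c)) = a * s + b * c"
    using N by simp
  have s0: "s \<ge> 0" "c \<ge> 0" unfolding s_def c_def by auto
  have bnd: "-1 \<le> (b * c - a * s) / (a * s + b * c)" "(b * c - a * s) / (a * s + b * c) \<le> 1"
    using N s0 a0 b0 by (simp_all add: divide_simps)
  have cs: "cos (g_angle (gmet A B) p x ((Qmat ** Qmat) *v x)) = (b * c - a * s) / (a * s + b * c)"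
    unfolding g_angle_def gxx gpp gxp sq using bnd by (rule cos_arccos)
  have r1: "rfun (gmet A B) p x = (R 1 1 * s + R 3 3 * c) / (a * s + b * c)"
    unfolding rf s_def c_def ..
  have r2: "rfun (gmet A B) p (Qmat *v x) = (R 1 1 * s + R 3 3 * c) / (a * s + b * c)"
    unfolding rf s_def c_def by (simp add: Qv algebra_simps)
  have r3: "rfun (gmet A B) p ((Qmat ** Qmat) *v x) = (R 1 1 * s + R 3 3 * c) / (a * s + b * c)"
    unfolding rf s_def c_def by (simp add: Pv algebra_simps)
  have r4: "rfun (gmet A B) p ((Qmat ** Qmat ** Qmat) *v x) = (R 1 1 * s + R 3 3 * c) / (a * s + b * c)"
    unfolding rf s_def c_def by (simp add: QQQv algebra_simps)
  have fin: "(R 1 1 * s + R 3 3 * c) / (a * s + b * c) =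
      (b * c - a * s) / (a * s + b * c) / 8 * (3 * (- 2 * R 1 1 / a + R 3 3 / b) + (2 * R 1 1 / a + R 3 3 / b))
      + (3 * (2 * R 1 1 / a + R 3 3 / b) + (- 2 * R 1 1 / a + R 3 3 / b)) / 8"
    using N nz by (simp add: divide_simps; algebra)
  show ?thesis
    unfolding r1 r2 r3 r4 cs sc scs using fin by simp
qed

end
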